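(* Let $\mathcal G=(\mathcal V,\mathcal E)$ be a strongly connected directed graph on $\mathcal V=\{1,\dots,n\}$, let $\mathcal D$ be an upper bound on its diameter, and let $\mathcal P=[p_{ij}]$ be a primitive column-stochastic weighted adjacency matrix of $\mathcal G$. Let $\varepsilon>0$ and let $u_i^0\in\mathbb R^p$, $i\in\mathcal V$, be arbitrary initial vectors. If all agents execute the finite-time $\varepsilon$-consensus protocol described in the context, then for every agent $i\in\mathcal V$ the protocol terminates after finitely many iterations, i.e. there is a finite $m$ with $\widehat R_i^{m-1}<\varepsilon$.
   Context: Conventions: $(i,j)\in\mathcal E$ denotes a directed edge from $j$ to $i$; the in-neighborhood of $i$ is $\mathcal N_i^-=\{j\neq i:(i,j)\in\mathcal E\}$. The graph is strongly connected: for every ordered pair of distinct nodes there is a directed path between them. $\mathcal P$ is column-stochastic ($p_{ij}\ge 0$, $\sum_{i}p_{ij}=1$ for every $j$), primitive (irreducible with a unique eigenvalue of maximum modulus), and a weighted adjacency matrix of $\mathcal G$ ($p_{ij}=0$ unless $j=i$ or $j\in\mathcal N_i^-$). The diameter of $\mathcal G$ is the longest shortest directed path length between two nodes. Norms are Euclidean. Finite-time $\varepsilon$-consensus protocol: each agent $i$ sets $w_i^0=u_i^0$, $v_i^0=1$, $R_i^0=0$, $m=1$, and for $t=0,1,2,\dots$ computes $u_i^{t+1}=p_{ii}u_i^t+\sum_{j\in\mathcal N_i^-}p_{ij}u_j^t$, $v_i^{t+1}=p_{ii}v_i^t+\sum_{j\in\mathcal N_i^-}p_{ij}v_j^t$,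 $w_i^{t+1}=u_i^{t+1}/v_i^{t+1}$, and $R_i^{t+1}=\max_{j\in\mathcal N_i^-}\{\|w_i^{t+1}-w_j^{t}\|+R_j^{t}\}$. Whenever $t=m\mathcal D-1$, agent $i$ sets $\widehat R_i^{m-1}=R_i^{t+1}$; if $\widehat R_i^{m-1}<\varepsilon$ it terminates (declares $\varepsilon$-consensus), otherwise it resets $R_i^{t+1}=0$ and sets $m\leftarrow m+1$. *)

theory Defs
  imports "HOL-Analysis.Analysis"
begin

text \<open>Nodes are the elements of a finite type 'v.  A pair (i,j) in E is a directed edge from j to i.\<close>

definition in_nbrs :: "('v \<times> 'v) set \<Rightarrow> 'v \<Rightarrow> 'v set" where
  "in_nbrs E i = {j. j \<noteq> i \<and> (i, j) \<in> E}"

definition strongly_connected :: "('v \<times> 'v) set \<Rightarrow> bool" where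
  "strongly_connected E \<longleftrightarrow> (\<forall>i j. i \<noteq> j \<longrightarrow> (i, j) \<in> E\<^sup>+)"

definition diam_bound :: "('v \<times> 'v) set \<Rightarrow> nat \<Rightarrow> bool" where
  "diam_bound E D \<longleftrightarrow> (\<forall>i j. i \<noteq> j \<longrightarrow> (\<exists>k. 1 \<le> k \<and> k \<le> D \<and> (i, j) \<in> E ^^ k))"

definition column_stochastic :: "('v::finite \<Rightarrow> 'v \<Rightarrow> real) \<Rightarrow> bool" where
  "column_stochastic P \<longleftrightarrow> (\<forall>i j. 0 \<le> P i j) \<and> (\<forall>j. (\<Sum>i\<in>UNIV. P i j) = 1)"

definition weighted_adjacency :: "('v \<Rightarrow> 'v \<Rightarrow> real) \<Rightarrow> ('v \<times> 'v) set \<Rightarrow> bool" where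
  "weighted_adjacency P E \<longleftrightarrow> (\<forall>i j. P i j \<noteq> 0 \<longrightarrow> j = i \<or> j \<in> in_nbrs E i)"

definition irreducible_mat :: "('v \<Rightarrow> 'v \<Rightarrow> real) \<Rightarrow> bool" where
  "irreducible_mat P \<longleftrightarrow> (\<forall>i j. i \<noteq> j \<longrightarrow> (i, j) \<in> {(a, b). P a b \<noteq> 0}\<^sup>+)"

definition is_eigenvalue :: "('v::finite \<Rightarrow> 'v \<Rightarrow> real) \<Rightarrow> complex \<Rightarrow> bool" where
  "is_eigenvalue P l \<longleftrightarrow> (\<exists>x :: 'v \<Rightarrow> complex. x \<noteq> (\<lambda>_. 0) \<and>
      (\<forall>i. (\<Sum>j\<in>UNIV. complex_of_real (P i j) * x j) = l * x i))"

definition primitive_mat :: "('v::finite \<Rightarrow> 'v \<Rightarrow> real) \<Rightarrow> bool" where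
  "primitive_mat P \<longleftrightarrow> irreducible_mat P \<and>
     (\<exists>l. is_eigenvalue P l \<and> (\<forall>\<mu>. is_eigenvalue P \<mu> \<and> \<mu> \<noteq> l \<longrightarrow> cmod \<mu> < cmod l))"

text \<open>Linear iteration x^{t+1}_i = p_ii x^t_i + sum over in-neighbours of p_ij x^t_j
  (used both for u, with vector values, and for v, with v^0 = 1).\<close>
primrec cons_iter :: "('v \<Rightarrow> 'v \<Rightarrow> real) \<Rightarrow> ('v \<times> 'v) set \<Rightarrow> ('v \<Rightarrow> 'b::real_vector)
    \<Rightarrow> nat \<Rightarrow> 'v \<Rightarrow> 'b" where
  "cons_iter P E x0 0 = x0"
| "cons_iter P E x0 (Suc t) = (\<lambda>i. P i i *\<^sub>R cons_iter P E x0 t i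
      + (\<Sum>j\<in>in_nbrs E i. P i j *\<^sub>R cons_iter P E x0 t j))"

definition cons_w :: "('v \<Rightarrow> 'v \<Rightarrow> real) \<Rightarrow> ('v \<times> 'v) set \<Rightarrow> ('v \<Rightarrow> 'b::real_vector)
    \<Rightarrow> nat \<Rightarrow> 'v \<Rightarrow> 'b" where
  "cons_w P E u0 t i = inverse (cons_iter P E (\<lambda>_. 1::real) t i) *\<^sub>R cons_iter P E u0 t i"

text \<open>The maximum over a nonempty set of nonnegative numbers is
  unchanged by inserting 0; the 0 only fixes the value on an empty neighbourhood.\<close>
definition R_update :: "('v \<times> 'v) set \<Rightarrow> (nat \<Rightarrow> 'v \<Rightarrow> 'b::real_normed_vector) \<Rightarrow> nat
    \<Rightarrow> ('v \<Rightarrow> real) \<Rightarrow> 'v \<Rightarrow> real" where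
  "R_update E W t Rprev i =
     Max (insert 0 ((\<lambda>j. norm (W (Suc t) i - W t j) + Rprev j) ` in_nbrs E i))"

primrec cons_R :: "('v \<times> 'v) set \<Rightarrow> nat \<Rightarrow> (nat \<Rightarrow> 'v \<Rightarrow> 'b::real_normed_vector)
    \<Rightarrow> nat \<Rightarrow> 'v \<Rightarrow> real" where
  "cons_R E D W 0 = (\<lambda>_. 0)"
| "cons_R E D W (Suc t) = (\<lambda>i. if Suc t mod D = 0 then 0
      else R_update E W t (cons_R E D W t) i)"

text \<open>Rhat_i^{m-1} = R_i^{mD} before reset, i.e. the value computed at t = mD - 1.
  Here Rhat k corresponds to m = k + 1.\<close>
definition cons_Rhat :: "('v \<times> 'v) set \<Rightarrow> nat \<Rightarrow> (nat \<Rightarrow> 'v \<Rightarrow> 'b::real_normed_vector)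
    \<Rightarrow> nat \<Rightarrow> 'v \<Rightarrow> real" where
  "cons_Rhat E D W k i = R_update E W (Suc k * D - 1) (cons_R E D W (Suc k * D - 1)) i"

end

theory Submission
  imports Defs
begin


lemma fixed_vec:
  fixes P :: "'v::finite \<Rightarrow> 'v \<Rightarrow> real"
  assumes cs: "column_stochastic P"
  shows "\<exists>x::'v\<Rightarrow>real. x \<noteq> (\<lambda>_. 0) \<and> (\<forall>i. (\<Sum>j\<in>UNIV. P i j * x j) = x i)"
proof -
  define f where "f = (\<lambda>x::real^'v. \<chi> i. (\<Sum>j\<in>UNIV. P i j * x$j) - x$i)"
  have lin: "linear f"
    unfolding f_def by (rule linearI) (auto simp: vec_eq_iff sum.distrib sum_distrib_left algebra_simps)
  have sumf: "(\<Sum>i\<in>UNIV. f x $ i) = 0" for x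
  proof -
    have "(\<Sum>i\<in>UNIV. f x $ i) = (\<Sum>i\<in>UNIV. \<Sum>j\<in>UNIV. P i j * x$j) - (\<Sum>i\<in>UNIV. x$i)"
      by (simp add: f_def sum_subtractf)
    also have "(\<Sum>i\<in>UNIV. \<Sum>j\<in>UNIV. P i j * x$j) = (\<Sum>j\<in>UNIV. (\<Sum>i\<in>UNIV. P i j) * x$j)"
      by (subst sum.swap) (simp add: sum_distrib_right)
    also have "\<dots> = (\<Sum>j\<in>UNIV. x$j)" using cs by (simp add: column_stochastic_def)
    finally show ?thesis by simp
  qed
  obtain i0 :: 'v where True by simp
  have "\<not> surj f"
  proof
    assume "surj f"
    then obtain x where "f x = (\<chi> i. if i = i0 then 1 else 0)" by (metis surjE)
    then have "(\<Sum>i\<in>UNIV. f x $ i) = 1" by simp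
    with sumf show False by simp
  qed
  with lin have "\<not> inj f" using linear_inj_imp_surj by blast
  then obtain x where x: "x \<noteq> 0" "f x = 0"
    using lin by (metis linear_injective_0)
  show ?thesis
  proof (intro exI[of _ "\<lambda>j. x$j"] conjI allI)
    show "(\<lambda>j. x$j) \<noteq> (\<lambda>_. 0)" using x(1) by (auto simp: vec_eq_iff fun_eq_iff)
    fix i
    from x(2) have "f x $ i = 0" by simp
    then show "(\<Sum>j\<in>UNIV. P i j * x$j) = x$i" by (simp add: f_def)
  qed
qed


lemma eig_le1:
  fixes P :: "'v::finite \<Rightarrow> 'v \<Rightarrow> real"
  assumes cs: "column_stochastic P" and ev: "is_eigenvalue P l"
  shows "cmod l \<le> 1"
proof -
  obtain x where x: "x \<noteq> (\<lambda>_. 0)" "\<And>i. (\<Sum>j\<in>UNIV. complex_of_real (P i j) * x j) = l * x i"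
    using ev unfolding is_eigenvalue_def by blast
  have P0: "P i j \<ge> 0" for i j using cs by (simp add: column_stochastic_def)
  have "cmod l * (\<Sum>i\<in>UNIV. cmod (x i)) = (\<Sum>i\<in>UNIV. cmod (l * x i))"
    by (simp add: sum_distrib_left norm_mult)
  also have "\<dots> = (\<Sum>i\<in>UNIV. cmod (\<Sum>j\<in>UNIV. complex_of_real (P i j) * x j))"
    using x(2) by simp
  also have "\<dots> \<le> (\<Sum>i\<in>UNIV. \<Sum>j\<in>UNIV. P i j * cmod (x j))"
    by (rule sum_mono, rule order_trans[OF norm_sum], rule sum_mono) (simp add: norm_mult P0)
  also have "\<dots> = (\<Sum>j\<in>UNIV. (\<Sum>i\<in>UNIV. P i j) * cmod (x j))"
    by (subst sum.swap) (simp add: sum_distrib_right)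
  also have "\<dots> = (\<Sum>j\<in>UNIV. cmod (x j))" using cs by (simp add: column_stochastic_def)
  finally have *: "cmod l * (\<Sum>i\<in>UNIV. cmod (x i)) \<le> (\<Sum>i\<in>UNIV. cmod (x i))" .
  obtain i0 where "x i0 \<noteq> 0" using x(1) by auto
  then have "0 < (\<Sum>i\<in>UNIV. cmod (x i))"
    using sum_pos2[of UNIV i0 "\<lambda>i. cmod (x i)"] by auto
  with * show ?thesis by (simp add: mult_le_cancel_right2)
qed

lemma phase_not_primitive:
  fixes P :: "'v::finite \<Rightarrow> 'v \<Rightarrow> real" and k :: "'v \<Rightarrow> nat"
  assumes cs: "column_stochastic P" and d: "2 \<le> d"
    and ph: "\<And>i j. P i j \<noteq> 0 \<Longrightarrow> k i = (k j + 1) mod d"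
  shows "\<not> primitive_mat P"
proof
  assume pr: "primitive_mat P"
  obtain x where x: "x \<noteq> (\<lambda>_. 0)" "\<And>i. (\<Sum>j\<in>UNIV. P i j * x j) = x i"
    using fixed_vec[OF cs] by blast
  have ev1: "is_eigenvalue P 1"
    unfolding is_eigenvalue_def
  proof (intro exI[of _ "\<lambda>i. complex_of_real (x i)"] conjI allI)
    show "(\<lambda>i. complex_of_real (x i)) \<noteq> (\<lambda>_. 0)" using x(1) by (auto simp: fun_eq_iff)
    fix i
    have "(\<Sum>j\<in>UNIV. complex_of_real (P i j) * complex_of_real (x j)) = complex_of_real (\<Sum>j\<in>UNIV. P i j * x j)"
      by simp
    then show "(\<Sum>j\<in>UNIV. complex_of_real (P i j) * complex_of_real (x j)) = 1 * complex_of_real (x i)"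
      using x(2) by simp
  qed
  define \<omega> where "\<omega> = cis (2 * pi / real d)"
  have wd: "\<omega> ^ d = 1" using d by (simp add: \<omega>_def Complex.DeMoivre)
  have wmod: "\<omega> ^ n = \<omega> ^ (n mod d)" for n
  proof -
    have "\<omega> ^ n = \<omega> ^ (d * (n div d) + n mod d)" by simp
    also have "\<dots> = \<omega> ^ (n mod d)" by (simp only: power_add power_mult wd) simp
    finally show ?thesis .
  qed
  define \<mu> where "\<mu> = \<omega> ^ (d - 1)"
  have w1: "\<omega> \<noteq> 1"
  proof
    assume "\<omega> = 1"
    then have "cos (2 * pi / real d) = 1" unfolding \<omega>_def by (metis cis.sel(1) one_complex.sel(1))
    then obtain n :: int where n: "2 * pi / real d = real_of_int n * 2 * pi" using cos_one_2pi_int by auto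
    have "0 < 2 * pi / real d" using d by simp
    moreover have "2 * pi / real d < 2 * pi" using d pi_gt_zero by (simp add: divide_less_eq)
    ultimately have "0 < real_of_int n" "real_of_int n < 1" using n pi_gt_zero
      by (simp_all add: zero_less_mult_iff mult_less_cancel_right1)
    then show False by (metis of_int_0_less_iff of_int_less_1_iff zero_less_iff_neq_zero linorder_not_le int_one_le_iff_zero_less)
  qed
  have mu1: "\<mu> \<noteq> 1"
  proof
    assume "\<mu> = 1"
    then have "\<omega> ^ (d - 1) * \<omega> = \<omega>" by (simp add: \<mu>_def)
    also have "\<omega> ^ (d - 1) * \<omega> = \<omega> ^ d" using d by (simp add: power_Suc2[symmetric])
    finally show False using wd w1 by simp
  qed
  have mumod: "cmod \<mu> = 1" by (simp add: \<mu>_def \<omega>_def norm_power)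
  have evmu: "is_eigenvalue P \<mu>"
    unfolding is_eigenvalue_def
  proof (intro exI[of _ "\<lambda>i. \<omega> ^ k i * complex_of_real (x i)"] conjI allI)
    show "(\<lambda>i. \<omega> ^ k i * complex_of_real (x i)) \<noteq> (\<lambda>_. 0)" using x(1)
      by (auto simp: fun_eq_iff \<omega>_def)
    fix i
    have "complex_of_real (P i j) * (\<omega> ^ k j * complex_of_real (x j))
        = \<mu> * \<omega> ^ k i * complex_of_real (P i j * x j)" for j
    proof (cases "P i j = 0")
      case False
      then have "k i = (k j + 1) mod d" by (rule ph)
      then have "\<omega> ^ k i = \<omega> ^ (k j + 1)" using wmod by metis
      then have "\<mu> * \<omega> ^ k i = \<omega> ^ (k j + 1 + (d - 1))" by (simp add: \<mu>_def power_add)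
      also have "k j + 1 + (d - 1) = k j + d" using d by simp
      also have "\<omega> ^ (k j + d) = \<omega> ^ k j" by (simp add: power_add wd)
      finally show ?thesis by simp
    qed simp
    then have "(\<Sum>j\<in>UNIV. complex_of_real (P i j) * (\<omega> ^ k j * complex_of_real (x j)))
       = (\<Sum>j\<in>UNIV. \<mu> * \<omega> ^ k i * complex_of_real (P i j * x j))"
      by (intro sum.cong) auto
    also have "\<dots> = \<mu> * \<omega> ^ k i * complex_of_real (\<Sum>j\<in>UNIV. P i j * x j)"
      by (simp only: sum_distrib_left of_real_sum)
    finally have "(\<Sum>j\<in>UNIV. complex_of_real (P i j) * (\<omega> ^ k j * complex_of_real (x j)))
       = \<mu> * \<omega> ^ k i * complex_of_real (\<Sum>j\<in>UNIV. P i j * x j)" .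
    then show "(\<Sum>j\<in>UNIV. complex_of_real (P i j) * (\<omega> ^ k j * complex_of_real (x j)))
       = \<mu> * (\<omega> ^ k i * complex_of_real (x i))" using x(2) by simp
  qed
  obtain l where l: "is_eigenvalue P l" "\<And>m. is_eigenvalue P m \<and> m \<noteq> l \<Longrightarrow> cmod m < cmod l"
    using pr unfolding primitive_mat_def by blast
  have "cmod l \<le> 1" by (rule eig_le1[OF cs l(1)])
  moreover have "1 < cmod l"
  proof (cases "l = 1")
    case True
    then show ?thesis using l(2)[of \<mu>] evmu mu1 mumod by simp
  next
    case False
    then show ?thesis using l(2)[of 1] ev1 by simp
  qed
  ultimately show False by simp
qed


lemma relpow_comp: "(x, y) \<in> R ^^ m \<Longrightarrow> (y, z) \<in> R ^^ n \<Longrightarrow> (x, z) \<in> R ^^ (m + n)"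
  by (auto simp: relpow_add)

lemma aperiodic:
  fixes P :: "'v::finite \<Rightarrow> 'v \<Rightarrow> real"
  assumes cs: "column_stochastic P" and pr: "primitive_mat P"
  shows "\<exists>N. \<forall>i j. (i, j) \<in> {(a, b). P a b \<noteq> 0} ^^ N"
proof -
  define G where "G = {(a, b). P a b \<noteq> 0}"
  have irr: "\<And>i j. i \<noteq> j \<Longrightarrow> (i, j) \<in> G\<^sup>+"
    using pr unfolding primitive_mat_def irreducible_mat_def G_def by blast
  have conn: "\<exists>n. (i, j) \<in> G ^^ n" for i j
  proof (cases "i = j")
    case True then show ?thesis by (intro exI[of _ 0]) simp
  next
    case False then show ?thesis using irr[OF False] trancl_power by blast
  qed
  obtain r :: 'v where True by simp
  define M where "M = {n. (r, r) \<in> G ^^ n}"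
  have M0: "0 \<in> M" by (simp add: M_def)
  have Madd: "a \<in> M \<Longrightarrow> b \<in> M \<Longrightarrow> a + b \<in> M" for a b
    unfolding M_def using relpow_comp by fast
  have Mmult: "a \<in> M \<Longrightarrow> q * a \<in> M" for a q
    by (induction q) (auto simp: M0 Madd)
  have pos: "\<exists>a\<in>M. 0 < a"
  proof (cases "\<exists>j. j \<noteq> r")
    case True
    then obtain j where "j \<noteq> r" by blast
    then have "(r, j) \<in> G\<^sup>+" "(j, r) \<in> G\<^sup>+" using irr by auto
    then have "(r, r) \<in> G\<^sup>+" by (rule trancl_trans)
    then show ?thesis unfolding M_def using trancl_power by blast
  next
    case False
    then have U: "UNIV = {r}" by auto
    have "(\<Sum>i\<in>UNIV. P i r) = 1" using cs by (simp add: column_stochastic_def)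
    then have "P r r = 1" by (simp add: U)
    then have "(r, r) \<in> G ^^ 1" by (simp add: G_def)
    then show ?thesis unfolding M_def by force
  qed
  define Ds where "Ds = {x. 0 < x \<and> (\<exists>b\<in>M. b + x \<in> M)}"
  obtain a0 where "a0 \<in> Ds" using pos M0 unfolding Ds_def by force
  define d where "d = (LEAST x. x \<in> Ds)"
  have dD: "d \<in> Ds" unfolding d_def using \<open>a0 \<in> Ds\<close> by (rule LeastI)
  then obtain b0 where b0: "0 < d" "b0 \<in> M" "b0 + d \<in> M" unfolding Ds_def by blast
  show ?thesis
  proof (cases "d = 1")
    case True
    have allM: "n \<in> M" if "b0 * b0 \<le> n" for n
    proof (cases "b0 = 0")
      case True
      then have "n * (b0 + 1) \<in> M" using Mmult b0 \<open>d = 1\<close> by blast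
      then show ?thesis using True by simp
    next
      case False
      define q where "q = n div b0"
      define s where "s = n mod b0"
      have "s < b0" using False by (simp add: s_def)
      have "b0 \<le> q" unfolding q_def using that False
        by (metis div_le_mono nonzero_mult_div_cancel_right)
      have "n = (q - s) * b0 + s * (b0 + 1)"
        using \<open>s < b0\<close> \<open>b0 \<le> q\<close> unfolding q_def s_def
        by (simp add: algebra_simps)
      moreover have "(q - s) * b0 + s * (b0 + 1) \<in> M"
        using Madd[OF Mmult[of b0 "q - s"] Mmult[of "b0 + 1" s]] b0 \<open>d = 1\<close> by simp
      ultimately show ?thesis by simp
    qed
    define c where "c j = (SOME n. (r, j) \<in> G ^^ n)" for j
    define a where "a i = (SOME n. (i, r) \<in> G ^^ n)" for i
    have c: "(r, j) \<in> G ^^ c j" for j unfolding c_def using conn by (rule someI_ex)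
    have a: "(i, r) \<in> G ^^ a i" for i unfolding a_def using conn by (rule someI_ex)
    define C where "C = Max (range c)"
    define A where "A = Max (range a)"
    have "(i, j) \<in> G ^^ (A + b0 * b0 + C)" for i j
    proof -
      have ci: "c j \<le> C" unfolding C_def by simp
      have ai: "a i \<le> A" unfolding A_def by simp
      define L where "L = A + b0 * b0 + C - a i - c j"
      have "L \<in> M" using allM ci ai unfolding L_def by simp
      then have "(r, r) \<in> G ^^ L" by (simp add: M_def)
      then have "(i, j) \<in> G ^^ (a i + (L + c j))" using relpow_comp[OF a relpow_comp[OF _ c]] by blast
      moreover have "a i + (L + c j) = A + b0 * b0 + C" using ci ai unfolding L_def by simp
      ultimately show ?thesis by simp
    qed
    then show ?thesis unfolding G_def by blast
  next
    case False
    with b0 have d2: "2 \<le> d" by simp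
    have mdvd: "d dvd m" if "m \<in> M" for m
    proof (rule ccontr)
      assume nd: "\<not> d dvd m"
      define s where "s = m mod d"
      define q where "q = m div d"
      have s0: "0 < s" using nd by (simp add: s_def mod_eq_0_iff_dvd[symmetric])
      have sd: "s < d" using b0 by (simp add: s_def)
      have "q * (b0 + d) \<in> M" using Mmult b0 by blast
      moreover have "m + q * b0 \<in> M" using Madd Mmult b0 that by blast
      moreover have "m + q * b0 = q * (b0 + d) + s"
        unfolding q_def s_def by (simp add: algebra_simps)
      ultimately have "s \<in> Ds" using s0 unfolding Ds_def by auto
      then have "d \<le> s" unfolding d_def by (rule Least_le)
      with sd show False by simp
    qed
    define a where "a i = (SOME n. (i, r) \<in> G ^^ n)" for i
    have a: "(i, r) \<in> G ^^ a i" for i unfolding a_def using conn by (rule someI_ex)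
    define k where "k i = a i mod d" for i
    have phase: "n mod d = k i" if "(i, r) \<in> G ^^ n" for i n
    proof -
      obtain c where c: "(r, i) \<in> G ^^ c" using conn by blast
      have "c + n \<in> M" "c + a i \<in> M" unfolding M_def using c that a relpow_comp by fast+
      then have "d dvd c + n" "d dvd c + a i" using mdvd by auto
      then have d1: "d dvd (c + n) - (c + a i)" and d2: "d dvd (c + a i) - (c + n)"
        using dvd_diff_nat by blast+
      show ?thesis
      proof (cases "a i \<le> n")
        case True
        then show ?thesis using d1 mod_eq_dvd_iff_nat[OF True, of d] by (simp add: k_def)
      next
        case False
        then show ?thesis using d2 mod_eq_dvd_iff_nat[of n "a i" d] by (simp add: k_def)
      qed
    qed
    have ph: "k i = (k j + 1) mod d" if "P i j \<noteq> 0" for i j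
    proof -
      have "(i, j) \<in> G ^^ 1" using that by (simp add: G_def)
      then have "(i, r) \<in> G ^^ (1 + a j)" using a relpow_comp by fast
      then have "k i = (1 + a j) mod d" using phase by metis
      then show ?thesis unfolding k_def by (simp add: mod_Suc_eq add.commute)
    qed
    have "\<not> primitive_mat P" by (rule phase_not_primitive[OF cs d2 ph])
    with pr show ?thesis by simp
  qed
qed


fun Pp :: "('v::finite \<Rightarrow> 'v \<Rightarrow> real) \<Rightarrow> nat \<Rightarrow> 'v \<Rightarrow> 'v \<Rightarrow> real" where
  "Pp P 0 i j = (if i = j then 1 else 0)"
| "Pp P (Suc n) i j = (\<Sum>k\<in>UNIV. P i k * Pp P n k j)"

lemma iter_Suc_full:
  fixes P :: "'v::finite \<Rightarrow> 'v \<Rightarrow> real" and x :: "'v \<Rightarrow> 'b::real_vector"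
  assumes wa: "weighted_adjacency P E"
  shows "cons_iter P E x (Suc t) i = (\<Sum>j\<in>UNIV. P i j *\<^sub>R cons_iter P E x t j)"
proof -
  let ?y = "cons_iter P E x t"
  have "(\<Sum>j\<in>UNIV. P i j *\<^sub>R ?y j) = P i i *\<^sub>R ?y i + (\<Sum>j\<in>UNIV - {i}. P i j *\<^sub>R ?y j)"
    by (simp add: sum.remove[of UNIV i])
  also have "(\<Sum>j\<in>UNIV - {i}. P i j *\<^sub>R ?y j) = (\<Sum>j\<in>in_nbrs E i. P i j *\<^sub>R ?y j)"
  proof (rule sum.mono_neutral_right)
    show "in_nbrs E i \<subseteq> UNIV - {i}" by (auto simp: in_nbrs_def)
    show "\<forall>j\<in>UNIV - {i} - in_nbrs E i. P i j *\<^sub>R ?y j = 0"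
      using wa by (auto simp: weighted_adjacency_def)
  qed simp
  finally show ?thesis by simp
qed

lemma iter_Pp:
  fixes P :: "'v::finite \<Rightarrow> 'v \<Rightarrow> real" and x :: "'v \<Rightarrow> 'b::real_vector"
  assumes wa: "weighted_adjacency P E"
  shows "cons_iter P E x (n + t) i = (\<Sum>j\<in>UNIV. Pp P n i j *\<^sub>R cons_iter P E x t j)"
proof (induction n arbitrary: i)
  case 0
  have "(\<Sum>j\<in>UNIV. Pp P 0 i j *\<^sub>R cons_iter P E x t j) = (\<Sum>j\<in>UNIV. if i = j then cons_iter P E x t j else 0)"
    by (intro sum.cong) auto
  then show ?case by simp
next
  case (Suc n)
  have "cons_iter P E x (Suc n + t) i = (\<Sum>k\<in>UNIV. P i k *\<^sub>R cons_iter P E x (n + t) k)"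
    using iter_Suc_full[OF wa] by simp
  also have "\<dots> = (\<Sum>k\<in>UNIV. \<Sum>j\<in>UNIV. (P i k * Pp P n k j) *\<^sub>R cons_iter P E x t j)"
    by (simp add: Suc scaleR_sum_right)
  also have "\<dots> = (\<Sum>j\<in>UNIV. Pp P (Suc n) i j *\<^sub>R cons_iter P E x t j)"
    by (subst sum.swap) (simp add: scaleR_sum_left)
  finally show ?case .
qed

lemma Pp_nonneg:
  assumes cs: "column_stochastic P" shows "0 \<le> Pp P n i j"
  using cs by (induction n arbitrary: i j) (auto simp: column_stochastic_def intro!: sum_nonneg)

lemma Pp_pos:
  assumes cs: "column_stochastic P"
  shows "(i, j) \<in> {(a, b). P a b \<noteq> 0} ^^ n \<Longrightarrow> 0 < Pp P n i j"
proof (induction n arbitrary: i j)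
  case 0
  then show ?case by simp
next
  case (Suc n)
  then obtain k where k: "P i k \<noteq> 0" "(k, j) \<in> {(a, b). P a b \<noteq> 0} ^^ n"
    using relpow_Suc_D2 by fastforce
  have "0 < P i k * Pp P n k j"
    using k Suc.IH[OF k(2)] cs by (simp add: column_stochastic_def order_le_neq_trans)
  moreover have "P i k * Pp P n k j \<le> (\<Sum>k\<in>UNIV. P i k * Pp P n k j)"
    by (rule member_le_sum) (use cs Pp_nonneg[OF cs] in \<open>auto simp: column_stochastic_def\<close>)
  ultimately show ?case by simp
qed

lemma V_props:
  fixes P :: "'v::finite \<Rightarrow> 'v \<Rightarrow> real"
  assumes cs: "column_stochastic P" and wa: "weighted_adjacency P E"
  shows "0 \<le> cons_iter P E (\<lambda>_. 1::real) t i \<and> (\<Sum>i\<in>UNIV. cons_iter P E (\<lambda>_. 1::real) t i) = real CARD('v)"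
proof (induction t arbitrary: i)
  case 0
  then show ?case by simp
next
  case (Suc t)
  have "0 \<le> cons_iter P E (\<lambda>_. 1::real) (Suc t) i"
    using iter_Suc_full[OF wa, of "\<lambda>_. 1::real" t] Suc cs
    by (auto simp: column_stochastic_def intro!: sum_nonneg)
  moreover have "(\<Sum>i\<in>UNIV. cons_iter P E (\<lambda>_. 1::real) (Suc t) i) = real CARD('v)"
  proof -
    have "(\<Sum>i\<in>UNIV. cons_iter P E (\<lambda>_. 1::real) (Suc t) i)
        = (\<Sum>i\<in>UNIV. \<Sum>j\<in>UNIV. P i j * cons_iter P E (\<lambda>_. 1::real) t j)"
      using iter_Suc_full[OF wa, of "\<lambda>_. 1::real" t] by simp
    also have "\<dots> = (\<Sum>j\<in>UNIV. (\<Sum>i\<in>UNIV. P i j) * cons_iter P E (\<lambda>_. 1::real) t j)"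
      by (subst sum.swap) (simp add: sum_distrib_right)
    also have "\<dots> = real CARD('v)" using cs Suc by (simp add: column_stochastic_def)
    finally show ?thesis .
  qed
  ultimately show ?case by blast
qed

lemma iter_component:
  fixes u0 :: "'v \<Rightarrow> real ^ 'p"
  shows "cons_iter P E u0 t i $ c = cons_iter P E (\<lambda>j. u0 j $ c) t i"
  by (induction t arbitrary: i) simp_all



lemma scalar_conv:
  fixes P :: "'v::finite \<Rightarrow> 'v \<Rightarrow> real" and x0 :: "'v \<Rightarrow> real"
  assumes cs: "column_stochastic P" and wa: "weighted_adjacency P E"
    and Nall: "\<forall>i j. (i, j) \<in> {(a, b). P a b \<noteq> 0} ^^ N" and e: "0 < e"
  shows "\<exists>T. \<forall>t\<ge>T. \<forall>i j. \<bar>cons_iter P E x0 (Suc t) i / cons_iter P E (\<lambda>_. 1) (Suc t) i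
      - cons_iter P E x0 t j / cons_iter P E (\<lambda>_. 1) t j\<bar> < e"
proof -
  define V where "V = cons_iter P E (\<lambda>_. 1::real)"
  define X where "X = cons_iter P E x0"
  define Z where "Z t i = X t i / V t i" for t i
  define n where "n = real CARD('v)"
  have n1: "1 \<le> n" unfolding n_def by simp
  define q where "q = Min (range (\<lambda>(i, j). Pp P N i j))"
  have qle: "q \<le> Pp P N i j" for i j unfolding q_def by (rule Min_le) auto
  have q0: "0 < q"
  proof -
    have "q \<in> range (\<lambda>(i, j). Pp P N i j)" unfolding q_def by (rule Min_in) auto
    then show ?thesis using Pp_pos[OF cs] Nall by auto
  qed
  have V0: "0 \<le> V t i" for t i using V_props[OF cs wa] unfolding V_def by blast
  have Vsum: "(\<Sum>i\<in>UNIV. V t i) = n" for t using V_props[OF cs wa] unfolding V_def n_def by blast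
  have Vle: "V t i \<le> n" for t i
    using member_le_sum[of i UNIV "V t"] V0 Vsum by simp
  have Pp0: "0 \<le> Pp P s i j" for s i j by (rule Pp_nonneg[OF cs])
  have XPp: "X (s + t) i = (\<Sum>j\<in>UNIV. Pp P s i j * X t j)" for s t i
    using iter_Pp[OF wa, of x0 s t i] unfolding X_def by simp
  have VPp: "V (s + t) i = (\<Sum>j\<in>UNIV. Pp P s i j * V t j)" for s t i
    using iter_Pp[OF wa, of "\<lambda>_. 1::real" s t i] unfolding V_def by simp
  have Vpos: "q \<le> V t i" if "N \<le> t" for t i
  proof -
    have "V t i = (\<Sum>j\<in>UNIV. Pp P N i j * V (t - N) j)" using VPp[of N "t - N" i] that by simp
    also have "\<dots> \<ge> (\<Sum>j\<in>UNIV. q * V (t - N) j)"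
      by (rule sum_mono) (simp add: mult_right_mono qle V0)
    also have "(\<Sum>j\<in>UNIV. q * V (t - N) j) = q * n" by (simp add: sum_distrib_left[symmetric] Vsum)
    finally show ?thesis using q0 n1
      by (smt (verit) mult_le_cancel_left1)
  qed
  have Vgt: "0 < V t i" if "N \<le> t" for t i using Vpos[OF that, of i] q0 by linarith
  have XZ: "X t j = V t j * Z t j" if "N \<le> t" for t j
    using Vgt[OF that, of j] unfolding Z_def by simp
  define Mx where "Mx t = Max (range (Z t))" for t
  define mn where "mn t = Min (range (Z t))" for t
  have Mx: "Z t j \<le> Mx t" for t j unfolding Mx_def by (rule Max_ge) auto
  have mn: "mn t \<le> Z t j" for t j unfolding mn_def by (rule Min_le) auto
  have gen: "mn t \<le> Z (s + t) i \<and> Z (s + t) i \<le> Mx t" if "N \<le> t" for s t i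
  proof -
    have Vst: "0 < V (s + t) i" using Vgt that by simp
    have "X (s + t) i = (\<Sum>j\<in>UNIV. Pp P s i j * V t j * Z t j)"
      using XPp XZ[OF that] by (simp add: mult.assoc)
    moreover have "(\<Sum>j\<in>UNIV. Pp P s i j * V t j * Z t j) \<le> (\<Sum>j\<in>UNIV. Pp P s i j * V t j * Mx t)"
      by (rule sum_mono) (rule mult_left_mono[OF Mx], simp add: Pp0 V0)
    moreover have "(\<Sum>j\<in>UNIV. Pp P s i j * V t j * mn t) \<le> (\<Sum>j\<in>UNIV. Pp P s i j * V t j * Z t j)"
      by (rule sum_mono) (rule mult_left_mono[OF mn], simp add: Pp0 V0)
    moreover have "(\<Sum>j\<in>UNIV. Pp P s i j * V t j * c) = V (s + t) i * c" for c
      using VPp by (simp add: sum_distrib_right)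
    ultimately have "V (s + t) i * mn t \<le> X (s + t) i" "X (s + t) i \<le> V (s + t) i * Mx t"
      by auto
    then show ?thesis using Vst unfolding Z_def by (simp add: divide_le_eq le_divide_eq mult.commute)
  qed
  define \<beta> where "\<beta> = min (q * q / n) (1/2)"
  have \<beta>0: "0 < \<beta>" using q0 n1 by (simp add: \<beta>_def)
  have \<beta>1: "\<beta> < 1" by (simp add: \<beta>_def)
  have contr: "Z (N + t) i \<le> Mx t - \<beta> * (Mx t - mn t)" if "N \<le> t" for t i
  proof -
    have "mn t \<in> range (Z t)" unfolding mn_def by (rule Min_in) auto
    then obtain jm where jm: "Z t jm = mn t" by auto
    have Vst: "0 < V (N + t) i" using Vgt that by simp
    have "V (N + t) i * Mx t - X (N + t) i = (\<Sum>j\<in>UNIV. Pp P N i j * V t j * (Mx t - Z t j))"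
    proof -
      have "(\<Sum>j\<in>UNIV. Pp P N i j * V t j * (Mx t - Z t j))
          = (\<Sum>j\<in>UNIV. Pp P N i j * V t j * Mx t - Pp P N i j * X t j)"
        using XZ[OF that] by (intro sum.cong) (simp_all add: algebra_simps)
      also have "\<dots> = (\<Sum>j\<in>UNIV. Pp P N i j * V t j) * Mx t - (\<Sum>j\<in>UNIV. Pp P N i j * X t j)"
        by (simp add: sum_subtractf sum_distrib_right)
      finally show ?thesis using XPp[of N t i] VPp[of N t i] by simp
    qed
    also have "\<dots> \<ge> Pp P N i jm * V t jm * (Mx t - Z t jm)"
      by (rule member_le_sum) (auto intro!: mult_nonneg_nonneg simp: Pp0 V0 Mx)
    also have "Pp P N i jm * V t jm * (Mx t - Z t jm) \<ge> q * q * (Mx t - mn t)"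
      using jm qle[of i jm] Vpos[OF that, of jm] q0 mn[of t jm] Mx[of t jm]
      by (intro mult_right_mono mult_mono) auto
    finally have A: "q * q * (Mx t - mn t) \<le> V (N + t) i * Mx t - X (N + t) i" .
    have sp0: "0 \<le> Mx t - mn t" using Mx[of t jm] mn[of t jm] by simp
    have "\<beta> * (Mx t - mn t) \<le> q * q / n * (Mx t - mn t)"
      using sp0 by (intro mult_right_mono) (auto simp: \<beta>_def)
    also have "\<dots> \<le> q * q * (Mx t - mn t) / V (N + t) i"
      using Vst Vle[of "N + t" i] sp0 q0
      by (simp add: divide_simps frac_le mult_left_mono)
    also have "\<dots> \<le> (V (N + t) i * Mx t - X (N + t) i) / V (N + t) i"
      using A Vst by (simp add: divide_right_mono)
    also have "\<dots> = Mx t - Z (N + t) i" using Vst unfolding Z_def by (simp add: field_simps)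
    finally show ?thesis by simp
  qed
  have Mxle: "Mx t' \<le> c" if "\<And>i. Z t' i \<le> c" for t' c
    unfolding Mx_def using that by (auto intro!: Max.boundedI)
  have mnge: "c \<le> mn t'" if "\<And>i. c \<le> Z t' i" for t' c
    unfolding mn_def using that by (auto intro!: Min.boundedI)
  define sp where "sp t = Mx t - mn t" for t
  have sp0: "0 \<le> sp t" for t using Mx[of t] mn[of t] unfolding sp_def by (metis diff_ge_0_iff_ge order_trans)
  have spmono: "sp (s + t) \<le> sp t" if "N \<le> t" for s t
  proof -
    have "Mx (s + t) \<le> Mx t" using gen[OF that] by (intro Mxle) blast
    moreover have "mn t \<le> mn (s + t)" using gen[OF that] by (intro mnge) blast
    ultimately show ?thesis unfolding sp_def by simp
  qed
  have spcontr: "sp (N + t) \<le> (1 - \<beta>) * sp t" if "N \<le> t" for t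
  proof -
    have "Mx (N + t) \<le> Mx t - \<beta> * (Mx t - mn t)" using contr[OF that] by (intro Mxle) blast
    moreover have "mn t \<le> mn (N + t)" using gen[OF that] by (intro mnge) blast
    ultimately show ?thesis unfolding sp_def by (simp add: algebra_simps)
  qed
  have spk: "sp (k * N + N) \<le> (1 - \<beta>) ^ k * sp N" for k
  proof (induction k)
    case 0 then show ?case by simp
  next
    case (Suc k)
    have "sp (Suc k * N + N) = sp (N + (k * N + N))" by (simp add: algebra_simps)
    also have "\<dots> \<le> (1 - \<beta>) * sp (k * N + N)" by (rule spcontr) simp
    also have "\<dots> \<le> (1 - \<beta>) * ((1 - \<beta>) ^ k * sp N)"
      using Suc \<beta>1 by (intro mult_left_mono) auto
    finally show ?case by simp
  qed
  have "\<exists>T. \<forall>t\<ge>T. sp t < e"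
  proof (cases "sp N = 0")
    case True
    then show ?thesis using spmono[of N] sp0 e
      by (metis le_add_diff_inverse2 order.refl order_le_less_trans nle_le)
  next
    case False
    then have spN: "0 < sp N" using sp0[of N] by simp
    obtain K where K: "(1 - \<beta>) ^ K < e / sp N"
      using real_arch_pow_inv[of "e / sp N" "1 - \<beta>"] e spN \<beta>0 by auto
    have "sp t < e" if "K * N + N \<le> t" for t
    proof -
      have "sp t = sp ((t - (K * N + N)) + (K * N + N))" using that by simp
      also have "\<dots> \<le> sp (K * N + N)" by (rule spmono) simp
      also have "\<dots> \<le> (1 - \<beta>) ^ K * sp N" by (rule spk)
      also have "\<dots> < e / sp N * sp N" using K spN by (intro mult_strict_right_mono) auto
      finally show ?thesis using spN by simp
    qed
    then show ?thesis by blast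
  qed
  then obtain T where T: "\<And>t. T \<le> t \<Longrightarrow> sp t < e" by blast
  have "\<bar>Z (Suc t) i - Z t j\<bar> < e" if "max T N \<le> t" for t i j
  proof -
    have "mn t \<le> Z (Suc t) i" "Z (Suc t) i \<le> Mx t" using gen[of t 1 i] that by auto
    then have "\<bar>Z (Suc t) i - Z t j\<bar> \<le> sp t" using Mx[of t j] mn[of t j] unfolding sp_def by linarith
    also have "\<dots> < e" using T that by simp
    finally show ?thesis .
  qed
  then show ?thesis unfolding Z_def X_def V_def by blast
qed



lemma R_update_less:
  fixes W :: "nat \<Rightarrow> 'v::finite \<Rightarrow> 'b::real_normed_vector"
  assumes "0 < b" "\<And>j. j \<in> in_nbrs E i \<Longrightarrow> norm (W (Suc t) i - W t j) + Rp j < b"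
  shows "R_update E W t Rp i < b"
  unfolding R_update_def using assms by (subst Max_less_iff) auto

lemma vec_conv:
  fixes P :: "'v::finite \<Rightarrow> 'v \<Rightarrow> real" and u0 :: "'v \<Rightarrow> real ^ 'p"
  assumes cs: "column_stochastic P" and wa: "weighted_adjacency P E"
    and Nall: "\<forall>i j. (i, j) \<in> {(a, b). P a b \<noteq> 0} ^^ N" and d: "0 < \<delta>"
  shows "\<exists>T. \<forall>t\<ge>T. \<forall>i j. norm (cons_w P E u0 (Suc t) i - cons_w P E u0 t j) < \<delta>"
proof -
  define e where "e = \<delta> / real CARD('p)"
  have e: "0 < e" using d by (simp add: e_def)
  define V where "V = cons_iter P E (\<lambda>_. 1::real)"
  have comp: "cons_w P E u0 t i $ c = cons_iter P E (\<lambda>j. u0 j $ c) t i / V t i" for t i c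
    unfolding cons_w_def V_def by (simp add: iter_component divide_inverse mult.commute)
  have "\<forall>c. eventually (\<lambda>t. \<forall>i j. \<bar>cons_w P E u0 (Suc t) i $ c - cons_w P E u0 t j $ c\<bar> < e) sequentially"
  proof
    fix c
    obtain T where T: "\<forall>t\<ge>T. \<forall>i j. \<bar>cons_iter P E (\<lambda>j. u0 j $ c) (Suc t) i / V (Suc t) i
      - cons_iter P E (\<lambda>j. u0 j $ c) t j / V t j\<bar> < e"
      using scalar_conv[OF cs wa Nall e, of "\<lambda>j. u0 j $ c"] unfolding V_def by blast
    then show "eventually (\<lambda>t. \<forall>i j. \<bar>cons_w P E u0 (Suc t) i $ c - cons_w P E u0 t j $ c\<bar> < e) sequentially"
      unfolding eventually_sequentially comp by blast
  qed
  then have "eventually (\<lambda>t. \<forall>c. \<forall>i j. \<bar>cons_w P E u0 (Suc t) i $ c - cons_w P E u0 t j $ c\<bar> < e) sequentially"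
    using eventually_all_finite[where P="\<lambda>t c. \<forall>i j. \<bar>cons_w P E u0 (Suc t) i $ c - cons_w P E u0 t j $ c\<bar> < e" and net=sequentially] by blast
  then obtain T where T: "\<And>t c i j. T \<le> t \<Longrightarrow> \<bar>cons_w P E u0 (Suc t) i $ c - cons_w P E u0 t j $ c\<bar> < e"
    unfolding eventually_sequentially by blast
  have "norm (cons_w P E u0 (Suc t) i - cons_w P E u0 t j) < \<delta>" if "T \<le> t" for t i j
  proof -
    have "norm (cons_w P E u0 (Suc t) i - cons_w P E u0 t j)
        \<le> (\<Sum>c\<in>UNIV. \<bar>(cons_w P E u0 (Suc t) i - cons_w P E u0 t j) $ c\<bar>)"
      by (rule norm_le_l1_cart)
    also have "\<dots> < (\<Sum>c\<in>(UNIV::'p set). e)"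
      by (rule sum_strict_mono) (use T[OF that] in auto)
    also have "\<dots> = \<delta>" by (simp add: e_def)
    finally show ?thesis .
  qed
  then show ?thesis by blast
qed

theorem proposition3p1:
  fixes E :: "('v::finite \<times> 'v) set"
    and D :: nat
    and P :: "'v \<Rightarrow> 'v \<Rightarrow> real"
    and \<epsilon> :: real
    and u0 :: "'v \<Rightarrow> real ^ 'p"
    and i :: 'v
  assumes "strongly_connected E"
    and "diam_bound E D"
    and "1 \<le> D"
    and "column_stochastic P"
    and "primitive_mat P"
    and "weighted_adjacency P E"
    and "0 < \<epsilon>"
  shows "\<exists>k. cons_Rhat E D (cons_w P E u0) k i < \<epsilon>"
proof -
  note cs = assms(4) and wa = assms(6) and D1 = assms(3)
  obtain N where Nall: "\<forall>i j. (i, j) \<in> {(a, b). P a b \<noteq> 0} ^^ N"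
    using aperiodic[OF cs assms(5)] by blast
  define W where "W = cons_w P E u0"
  define \<delta> where "\<delta> = \<epsilon> / real D"
  have d0: "0 < \<delta>" using assms(7) D1 by (simp add: \<delta>_def)
  obtain T where T: "\<And>t i j. T \<le> t \<Longrightarrow> norm (W (Suc t) i - W t j) < \<delta>"
    using vec_conv[OF cs wa Nall d0, of u0] unfolding W_def by blast
  define k where "k = T"
  have kT: "T \<le> k * D" using D1 unfolding k_def by simp
  have Rb: "\<forall>i. cons_R E D W (k * D + r) i \<le> real r * \<delta>" if "r < D" for r
    using that
  proof (induction r)
    case 0
    show ?case
    proof (cases "k * D")
      case 0 then show ?thesis by (simp only: add_0_right) simp
    next
      case (Suc t')
      then have "Suc t' mod D = 0" by (metis mod_mult_self2_is_0)
      then show ?thesis using Suc by simp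
    qed
  next
    case (Suc r)
    have nz: "Suc (k * D + r) mod D \<noteq> 0"
    proof -
      have "Suc (k * D + r) mod D = Suc r mod D" by (simp add: add.commute[of "k * D"])
      also have "\<dots> = Suc r" using Suc.prems by simp
      finally show ?thesis by simp
    qed
    have IH: "\<forall>i. cons_R E D W (k * D + r) i \<le> real r * \<delta>" using Suc by simp
    show ?case
    proof
      fix i
      have "R_update E W (k * D + r) (cons_R E D W (k * D + r)) i < \<delta> + real r * \<delta>"
      proof (rule R_update_less)
        show "0 < \<delta> + real r * \<delta>" using d0 by (simp add: add_pos_nonneg)
        fix j
        have "norm (W (Suc (k * D + r)) i - W (k * D + r) j) < \<delta>" using T kT by simp
        then show "norm (W (Suc (k * D + r)) i - W (k * D + r) j) + cons_R E D W (k * D + r) j < \<delta> + real r * \<delta>"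
          using IH by (smt (verit))
      qed
      then show "cons_R E D W (k * D + Suc r) i \<le> real (Suc r) * \<delta>"
        using nz by (simp add: algebra_simps)
    qed
  qed
  have eq: "Suc k * D - 1 = k * D + (D - 1)" using D1 by simp
  have "cons_Rhat E D W k i < \<delta> + real (D - 1) * \<delta>"
    unfolding cons_Rhat_def eq
  proof (rule R_update_less)
    show "0 < \<delta> + real (D - 1) * \<delta>" using d0 by (simp add: add_pos_nonneg)
    fix j
    have "norm (W (Suc (k * D + (D - 1))) i - W (k * D + (D - 1)) j) < \<delta>" using T kT by simp
    moreover have "cons_R E D W (k * D + (D - 1)) j \<le> real (D - 1) * \<delta>" using Rb[of "D - 1"] D1 by simp
    ultimately show "norm (W (Suc (k * D + (D - 1))) i - W (k * D + (D - 1)) j) + cons_R E D W (k * D + (D - 1)) j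
        < \<delta> + real (D - 1) * \<delta>" by simp
  qed
  also have "\<delta> + real (D - 1) * \<delta> = \<epsilon>" using D1 unfolding \<delta>_def
    by (simp add: of_nat_diff field_simps)
  finally show ?thesis unfolding W_def by blast
qed

end
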